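(* Let $\mathcal{X}$ be a finite set, $\pi$ a probability mass function on $\mathcal{X}$ with full support, and let a group $\mathcal{G}$ act on $\mathcal{X}$. Let $G$, $M$, $B$ be the Gibbs, Metropolis–Hastings and Barker orbit kernels for this same action. Then $GM=MG=BG=GB=G$.
   Context: With $\mathcal{O}(x)$ the orbit of $x$ and $\pi(A)=\sum_{z\in A}\pi(z)$: $G(x,y)=\pi(y)/\pi(\mathcal{O}(x))$ for $y\in\mathcal{O}(x)$ and $0$ otherwise; $M(x,y)=\frac{1}{|\mathcal{O}(x)|-1}\min\{1,\pi(y)/\pi(x)\}$ for $y\in\mathcal{O}(x)\setminus\{x\}$, $0$ for $y\notin\mathcal{O}(x)$, and $M(x,x)=1-\sum_{y\ne x}M(x,y)$ (so $M(x,x)=1$ for singleton orbits); $B$ is defined like $M$ with acceptance $\pi(y)/(\pi(x)+\pi(y))$. *)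

theory Defs
  imports "HOL-Analysis.Analysis" "HOL-Algebra.Group_Action"
begin

text \<open>Markov kernels on a finite state space X are represented as functions
  'b \<Rightarrow> 'b \<Rightarrow> real; only their values on X \<times> X matter.\<close>

definition kernel_mult :: "'b set \<Rightarrow> ('b \<Rightarrow> 'b \<Rightarrow> real) \<Rightarrow> ('b \<Rightarrow> 'b \<Rightarrow> real) \<Rightarrow> 'b \<Rightarrow> 'b \<Rightarrow> real" where
  "kernel_mult X K L x z = (\<Sum>y\<in>X. K x y * L y z)"

definition gibbs_kernel :: "_ \<Rightarrow> ('a \<Rightarrow> 'b \<Rightarrow> 'b) \<Rightarrow> ('b \<Rightarrow> real) \<Rightarrow> 'b \<Rightarrow> 'b \<Rightarrow> real" where
  "gibbs_kernel G \<phi> \<pi> x y =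
     (if y \<in> orbit G \<phi> x then \<pi> y / (\<Sum>z\<in>orbit G \<phi> x. \<pi> z) else 0)"

definition orbit_offdiag :: "_ \<Rightarrow> ('a \<Rightarrow> 'b \<Rightarrow> 'b) \<Rightarrow> ('b \<Rightarrow> 'b \<Rightarrow> real) \<Rightarrow> 'b \<Rightarrow> 'b \<Rightarrow> real" where
  "orbit_offdiag G \<phi> acc x y =
     (if y \<in> orbit G \<phi> x - {x}
      then 1 / (real (card (orbit G \<phi> x)) - 1) * acc x y else 0)"

definition orbit_kernel :: "_ \<Rightarrow> ('a \<Rightarrow> 'b \<Rightarrow> 'b) \<Rightarrow> ('b \<Rightarrow> 'b \<Rightarrow> real) \<Rightarrow> 'b \<Rightarrow> 'b \<Rightarrow> real" where
  "orbit_kernel G \<phi> acc x y =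
     (if y = x then 1 - (\<Sum>w\<in>orbit G \<phi> x - {x}. orbit_offdiag G \<phi> acc x w)
      else orbit_offdiag G \<phi> acc x y)"

definition mh_kernel :: "_ \<Rightarrow> ('a \<Rightarrow> 'b \<Rightarrow> 'b) \<Rightarrow> ('b \<Rightarrow> real) \<Rightarrow> 'b \<Rightarrow> 'b \<Rightarrow> real" where
  "mh_kernel G \<phi> \<pi> = orbit_kernel G \<phi> (\<lambda>x y. min 1 (\<pi> y / \<pi> x))"

definition barker_kernel :: "_ \<Rightarrow> ('a \<Rightarrow> 'b \<Rightarrow> 'b) \<Rightarrow> ('b \<Rightarrow> real) \<Rightarrow> 'b \<Rightarrow> 'b \<Rightarrow> real" where
  "barker_kernel G \<phi> \<pi> = orbit_kernel G \<phi> (\<lambda>x y. \<pi> y / (\<pi> x + \<pi> y))"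

end

theory Submission
  imports Defs
begin

lemma orb_sub:
  assumes "group_action G X \<phi>" "x \<in> X"
  shows "orbit G \<phi> x \<subseteq> X"
  using group_action.element_image[OF assms(1)] assms(2) by (auto simp: orbit_def)

lemma orb_refl:
  assumes "group_action G X \<phi>" "x \<in> X"
  shows "x \<in> orbit G \<phi> x"
  using group_action.orbit_refl[OF assms] .

lemma orb_eq:
  assumes "group_action G X \<phi>" "x \<in> X" "y \<in> orbit G \<phi> x"
  shows "orbit G \<phi> y = orbit G \<phi> x"
proof -
  have yX: "y \<in> X" using orb_sub[OF assms(1,2)] assms(3) by blast
  have xy: "x \<in> orbit G \<phi> y" using group_action.orbit_sym[OF assms(1) assms(2) yX assms(3)] .
  show ?thesis
  proof
    show "orbit G \<phi> y \<subseteq> orbit G \<phi> x"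
    proof
      fix w assume w: "w \<in> orbit G \<phi> y"
      have "w \<in> X" using orb_sub[OF assms(1) yX] w by blast
      then show "w \<in> orbit G \<phi> x"
        using group_action.orbit_trans[OF assms(1) assms(2) yX _ assms(3) w] by blast
    qed
  next
    show "orbit G \<phi> x \<subseteq> orbit G \<phi> y"
    proof
      fix w assume w: "w \<in> orbit G \<phi> x"
      have "w \<in> X" using orb_sub[OF assms(1,2)] w by blast
      then show "w \<in> orbit G \<phi> y"
        using group_action.orbit_trans[OF assms(1) yX assms(2) _ xy w] by blast
    qed
  qed
qed

lemma K_zero:
  assumes "y \<notin> orbit G \<phi> x" "x \<in> orbit G \<phi> x"
  shows "orbit_kernel G \<phi> acc x y = 0"
  using assms by (auto simp: orbit_kernel_def orbit_offdiag_def)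

lemma K_rowsum:
  assumes "finite (orbit G \<phi> x)" "x \<in> orbit G \<phi> x"
  shows "(\<Sum>y\<in>orbit G \<phi> x. orbit_kernel G \<phi> acc x y) = 1"
proof -
  have "(\<Sum>y\<in>orbit G \<phi> x. orbit_kernel G \<phi> acc x y) =
        orbit_kernel G \<phi> acc x x + (\<Sum>y\<in>orbit G \<phi> x - {x}. orbit_kernel G \<phi> acc x y)"
    using assms by (simp add: sum.remove)
  also have "(\<Sum>y\<in>orbit G \<phi> x - {x}. orbit_kernel G \<phi> acc x y)
      = (\<Sum>y\<in>orbit G \<phi> x - {x}. orbit_offdiag G \<phi> acc x y)"
    by (rule sum.cong) (auto simp: orbit_kernel_def)
  finally show ?thesis by (simp add: orbit_kernel_def)
qed

lemma KG:
  assumes fin: "finite X" and ga: "group_action G X \<phi>" and xX: "x \<in> X"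
  shows "kernel_mult X (orbit_kernel G \<phi> acc) (gibbs_kernel G \<phi> \<pi>) x z = gibbs_kernel G \<phi> \<pi> x z"
proof -
  let ?O = "orbit G \<phi> x"
  have sub: "?O \<subseteq> X" using orb_sub[OF ga xX] .
  have xO: "x \<in> ?O" using orb_refl[OF ga xX] .
  have finO: "finite ?O" using fin sub finite_subset by blast
  have "kernel_mult X (orbit_kernel G \<phi> acc) (gibbs_kernel G \<phi> \<pi>) x z
      = (\<Sum>y\<in>?O. orbit_kernel G \<phi> acc x y * gibbs_kernel G \<phi> \<pi> y z)"
    unfolding kernel_mult_def
    by (rule sum.mono_neutral_right[OF fin sub]) (auto simp: K_zero[OF _ xO])
  also have "\<dots> = (\<Sum>y\<in>?O. orbit_kernel G \<phi> acc x y * gibbs_kernel G \<phi> \<pi> x z)"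
    by (rule sum.cong) (auto simp: gibbs_kernel_def orb_eq[OF ga xX])
  also have "\<dots> = gibbs_kernel G \<phi> \<pi> x z"
    by (simp add: sum_distrib_right[symmetric] K_rowsum[OF finO xO])
  finally show ?thesis .
qed

lemma stat:
  assumes fin: "finite X" and ga: "group_action G X \<phi>" and zX: "z \<in> X"
    and db: "\<And>y w. y \<in> X \<Longrightarrow> w \<in> X \<Longrightarrow> \<pi> y * acc y w = \<pi> w * acc w y"
  shows "(\<Sum>y\<in>orbit G \<phi> z. \<pi> y * orbit_kernel G \<phi> acc y z) = \<pi> z"
proof -
  let ?O = "orbit G \<phi> z"
  have sub: "?O \<subseteq> X" using orb_sub[OF ga zX] .
  have zO: "z \<in> ?O" using orb_refl[OF ga zX] .
  have finO: "finite ?O" using fin sub finite_subset by blast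
  have off: "\<pi> y * orbit_kernel G \<phi> acc y z = \<pi> z * orbit_kernel G \<phi> acc z y"
    if y: "y \<in> ?O - {z}" for y
  proof -
    have yX: "y \<in> X" using y sub by blast
    have Oy: "orbit G \<phi> y = ?O" using orb_eq[OF ga zX] y by blast
    have zy: "z \<in> orbit G \<phi> y - {y}" using Oy y zO by auto
    have "\<pi> y * orbit_kernel G \<phi> acc y z = 1 / (real (card ?O) - 1) * (\<pi> y * acc y z)"
      using y zy Oy by (simp add: orbit_kernel_def orbit_offdiag_def)
    also have "\<dots> = 1 / (real (card ?O) - 1) * (\<pi> z * acc z y)" using db[OF yX zX] by simp
    also have "\<dots> = \<pi> z * orbit_kernel G \<phi> acc z y"
      using y by (simp add: orbit_kernel_def orbit_offdiag_def)
    finally show ?thesis .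
  qed
  have "(\<Sum>y\<in>?O. \<pi> y * orbit_kernel G \<phi> acc y z)
      = \<pi> z * orbit_kernel G \<phi> acc z z + (\<Sum>y\<in>?O - {z}. \<pi> y * orbit_kernel G \<phi> acc y z)"
    using finO zO by (simp add: sum.remove)
  also have "(\<Sum>y\<in>?O - {z}. \<pi> y * orbit_kernel G \<phi> acc y z)
      = (\<Sum>y\<in>?O - {z}. \<pi> z * orbit_kernel G \<phi> acc z y)"
    by (rule sum.cong) (auto simp: off)
  also have "\<pi> z * orbit_kernel G \<phi> acc z z + \<dots> = \<pi> z * (\<Sum>y\<in>?O. orbit_kernel G \<phi> acc z y)"
    using finO zO by (simp add: sum.remove sum_distrib_left distrib_left)
  also have "\<dots> = \<pi> z" using K_rowsum[OF finO zO] by simp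
  finally show ?thesis .
qed

lemma GK:
  assumes fin: "finite X" and ga: "group_action G X \<phi>" and xX: "x \<in> X" and zX: "z \<in> X"
    and db: "\<And>y w. y \<in> X \<Longrightarrow> w \<in> X \<Longrightarrow> \<pi> y * acc y w = \<pi> w * acc w y"
  shows "kernel_mult X (gibbs_kernel G \<phi> \<pi>) (orbit_kernel G \<phi> acc) x z = gibbs_kernel G \<phi> \<pi> x z"
proof -
  let ?O = "orbit G \<phi> x"
  have sub: "?O \<subseteq> X" using orb_sub[OF ga xX] .
  have xO: "x \<in> ?O" using orb_refl[OF ga xX] .
  have "kernel_mult X (gibbs_kernel G \<phi> \<pi>) (orbit_kernel G \<phi> acc) x z
      = (\<Sum>y\<in>?O. gibbs_kernel G \<phi> \<pi> x y * orbit_kernel G \<phi> acc y z)"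
    unfolding kernel_mult_def
    by (rule sum.mono_neutral_right[OF fin sub]) (auto simp: gibbs_kernel_def)
  also have "\<dots> = (\<Sum>y\<in>?O. \<pi> y * orbit_kernel G \<phi> acc y z) / (\<Sum>w\<in>?O. \<pi> w)"
    by (simp add: gibbs_kernel_def sum_divide_distrib)
  also have "\<dots> = gibbs_kernel G \<phi> \<pi> x z"
  proof (cases "z \<in> ?O")
    case True
    have "?O = orbit G \<phi> z" using orb_eq[OF ga xX True] by simp
    then show ?thesis using stat[OF fin ga zX db] True by (simp add: gibbs_kernel_def)
  next
    case False
    have "orbit_kernel G \<phi> acc y z = 0" if "y \<in> ?O" for y
      using K_zero[of z G \<phi> y acc] orb_eq[OF ga xX that] that False by auto
    then show ?thesis using False by (simp add: gibbs_kernel_def)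
  qed
  finally show ?thesis .
qed

theorem lemma3p4:
  fixes G :: "('a, 'c) monoid_scheme" and X :: "'b set"
    and \<phi> :: "'a \<Rightarrow> 'b \<Rightarrow> 'b" and \<pi> :: "'b \<Rightarrow> real"
  assumes "finite X"
    and "group G"
    and "group_action G X \<phi>"
    and "\<And>x. x \<in> X \<Longrightarrow> \<pi> x > 0"
    and "(\<Sum>x\<in>X. \<pi> x) = 1"
    and "x \<in> X" and "z \<in> X"
  shows "kernel_mult X (gibbs_kernel G \<phi> \<pi>) (mh_kernel G \<phi> \<pi>) x z = gibbs_kernel G \<phi> \<pi> x z \<and>
         kernel_mult X (mh_kernel G \<phi> \<pi>) (gibbs_kernel G \<phi> \<pi>) x z = gibbs_kernel G \<phi> \<pi> x z \<and>
         kernel_mult X (barker_kernel G \<phi> \<pi>) (gibbs_kernel G \<phi> \<pi>) x z = gibbs_kernel G \<phi> \<pi> x z \<and>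
         kernel_mult X (gibbs_kernel G \<phi> \<pi>) (barker_kernel G \<phi> \<pi>) x z = gibbs_kernel G \<phi> \<pi> x z"
proof -
  have db1: "\<pi> y * min 1 (\<pi> w / \<pi> y) = \<pi> w * min 1 (\<pi> y / \<pi> w)"
    if "y \<in> X" "w \<in> X" for y w
  proof -
    have py: "\<pi> y > 0" and pw: "\<pi> w > 0" using assms(4) that by auto
    have "\<pi> y * min 1 (\<pi> w / \<pi> y) = min (\<pi> y) (\<pi> w)"
      using py by (simp add: min_def field_simps)
    moreover have "\<pi> w * min 1 (\<pi> y / \<pi> w) = min (\<pi> w) (\<pi> y)"
      using pw by (simp add: min_def field_simps)
    ultimately show ?thesis by (simp add: min.commute)
  qed
  have db2: "\<pi> y * (\<pi> w / (\<pi> y + \<pi> w)) = \<pi> w * (\<pi> y / (\<pi> w + \<pi> y))"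
    if "y \<in> X" "w \<in> X" for y w
    by (simp add: add.commute mult.commute)
  show ?thesis
    unfolding mh_kernel_def barker_kernel_def
    using KG[OF assms(1,3,6)]
      GK[OF assms(1,3,6,7), of \<pi> "\<lambda>x y. min 1 (\<pi> y / \<pi> x)", OF db1]
      GK[OF assms(1,3,6,7), of \<pi> "\<lambda>x y. \<pi> y / (\<pi> x + \<pi> y)", OF db2]
    by blast
qed

end
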